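(* Let $\mathcal S_1=(C,\phi_1,F)$ and $\mathcal S_2=(C,\phi_2,F)$ be two systems with common component set $C=[n]$, semicoherent structure functions $\phi_1,\phi_2$, and continuous i.i.d. component lifetimes. Then for every $k,l\in\{0,\ldots,n\}$, \[ \overline S_{k,l}=\sum_{A\subseteq C,\ |A|=n-k}\ \sum_{B\subseteq C,\ |B|=n-l}q_0(A,B)\,\phi_1(A)\,\phi_2(B). \]
   Context: Let $n\ge1$, $C=[n]$, with component lifetimes $T_1,\ldots,T_n$ continuous and i.i.d. A structure function $\phi\colon\{0,1\}^n\to\{0,1\}$ is semicoherent if nondecreasing in each variable with $\phi(0,\ldots,0)=0$, $\phi(1,\ldots,1)=1$; Boolean vectors are identified with subsets via $x_i=1\iff i\in A$. With $X_j(t)=\mathrm{Ind}(T_j>t)$, $\mathbf X(t)=(X_1(t),\ldots,X_n(t))$, the lifetime $T_{\mathcal S}$ of $\mathcal S=(C,\phi,F)$ is the random time with $\phi(\mathbf X(t))=1$ iff $t<T_{\mathcal S}$. $T_{k:n}$ is the $k$-th smallest lifetime, $T_{0:n}=0$. The tail bivariate structure signature is $\overline S_{k,l}=\Pr(T_{\mathcal S_1}>T_{k:n}\text{ and }T_{\mathcal S_2}>T_{l:n})$, $k,l=0,\ldots,n$. The function $q_0$ is \[ q_0(A,B)=\begin{cases}\frac{(n-|A|)!\,(|A|-|B|)!\,|B|!}{n!} & \text{if } B\subseteq A,\\[2pt] \frac{(n-|B|)!\,(|B|-|A|)!\,|A|!}{n!} & \text{if } A\subseteq B,\\[2pt] 0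 & \text{otherwise.}\end{cases} \] *)

theory Defs
  imports "HOL-Probability.Probability"
begin

text \<open>Components are indexed by C = {1..n}; a Boolean state vector is identified
with the set of working components. A structure function is a predicate on sets.\<close>

definition semicoherent :: "nat \<Rightarrow> (nat set \<Rightarrow> bool) \<Rightarrow> bool" where
  "semicoherent n \<phi> \<longleftrightarrow>
     (\<forall>A B. A \<subseteq> B \<and> B \<subseteq> {1..n} \<longrightarrow> \<phi> A \<longrightarrow> \<phi> B) \<and> \<not> \<phi> {} \<and> \<phi> {1..n}"

definition state_set :: "nat \<Rightarrow> (nat \<Rightarrow> 'a \<Rightarrow> real) \<Rightarrow> real \<Rightarrow> 'a \<Rightarrow> nat set" where
  "state_set n T t \<omega> = {j \<in> {1..n}. T j \<omega> > t}"

definition is_system_lifetime ::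
  "'a measure \<Rightarrow> nat \<Rightarrow> (nat set \<Rightarrow> bool) \<Rightarrow> (nat \<Rightarrow> 'a \<Rightarrow> real) \<Rightarrow> ('a \<Rightarrow> real) \<Rightarrow> bool" where
  "is_system_lifetime M n \<phi> T TS \<longleftrightarrow>
     (\<forall>\<omega>\<in>space M. \<forall>t. \<phi> (state_set n T t \<omega>) \<longleftrightarrow> t < TS \<omega>)"

definition order_stat :: "nat \<Rightarrow> (nat \<Rightarrow> 'a \<Rightarrow> real) \<Rightarrow> nat \<Rightarrow> 'a \<Rightarrow> real" where
  "order_stat n T k \<omega> = (if k = 0 then 0 else sort (map (\<lambda>j. T j \<omega>) [1..<Suc n]) ! (k - 1))"

definition q0 :: "nat \<Rightarrow> nat set \<Rightarrow> nat set \<Rightarrow> real" where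
  "q0 n A B =
     (if B \<subseteq> A then fact (n - card A) * fact (card A - card B) * fact (card B) / fact n
      else if A \<subseteq> B then fact (n - card B) * fact (card B - card A) * fact (card A) / fact n
      else 0)"

end

theory Submission
  imports Defs
begin


lemma sort_filter_len:
  fixes xs :: "real list"
  shows "length (filter P (sort xs)) = length (filter P xs)"
by (simp add: filter_sort)

lemma sorted_kth:
  fixes ys :: "real list"
  assumes "sorted ys" "1 \<le> k" "k \<le> length ys"
  shows "length (filter (\<lambda>x. x < ys!(k-1)) ys) < k"
    and "k \<le> length (filter (\<lambda>x. x \<le> ys!(k-1)) ys)"
proof -
  let ?v = "ys!(k-1)"
  have "filter (\<lambda>x. x < ?v) (drop (k-1) ys) = []"
  proof -
    have "\<forall>x\<in>set (drop (k-1) ys). \<not> x < ?v"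
    proof
      fix x assume "x \<in> set (drop (k-1) ys)"
      then obtain i where i: "i < length (drop (k-1) ys)" "x = drop (k-1) ys ! i"
        by (auto simp: in_set_conv_nth)
      then have "x = ys ! (k-1+i)" using assms by simp
      moreover have "ys!(k-1) \<le> ys!(k-1+i)" using assms i by (intro sorted_nth_mono) auto
      ultimately show "\<not> x < ?v" by simp
    qed
    then show ?thesis by (simp add: filter_empty_conv)
  qed
  then have "length (filter (\<lambda>x. x < ?v) ys) = length (filter (\<lambda>x. x < ?v) (take (k-1) ys))"
    by (metis append_Nil2 append_take_drop_id filter_append)
  also have "\<dots> \<le> k - 1" using length_filter_le[of _ "take (k-1) ys"] by simp
  finally show "length (filter (\<lambda>x. x < ?v) ys) < k" using assms by simp
  have "filter (\<lambda>x. x \<le> ?v) (take k ys) = take k ys"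
  proof -
    have "\<forall>x\<in>set (take k ys). x \<le> ?v"
    proof
      fix x assume "x \<in> set (take k ys)"
      then obtain i where i: "i < length (take k ys)" "x = take k ys ! i"
        by (auto simp: in_set_conv_nth)
      then show "x \<le> ?v" using assms by (auto intro!: sorted_nth_mono)
    qed
    then show ?thesis by simp
  qed
  then have "k = length (filter (\<lambda>x. x \<le> ?v) (take k ys))" using assms by simp
  also have "\<dots> \<le> length (filter (\<lambda>x. x \<le> ?v) ys)"
    by (metis append_take_drop_id filter_append length_append le_add1)
  finally show "k \<le> length (filter (\<lambda>x. x \<le> ?v) ys)" .
qed

lemma len_filter_map_card:
  "length (filter P (map f [1..<Suc n])) = card {j\<in>{1..n}. P (f j)}"
proof -
  have "length (filter P (map f [1..<Suc n])) = length (filter (P \<circ> f) [1..<Suc n])"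
    by (simp add: filter_map)
  also have "\<dots> = card ({x. (P \<circ> f) x} \<inter> set [1..<Suc n])"
    by (rule distinct_length_filter) simp
  also have "{x. (P \<circ> f) x} \<inter> set [1..<Suc n] = {j\<in>{1..n}. P (f j)}" by auto
  finally show ?thesis .
qed

lemma order_stat_prop:
  assumes "1 \<le> k" "k \<le> n"
  shows "card {j\<in>{1..n}. T j \<omega> < order_stat n T k \<omega>} < k"
    and "k \<le> card {j\<in>{1..n}. T j \<omega> \<le> order_stat n T k \<omega>}"
proof -
  let ?xs = "map (\<lambda>j. T j \<omega>) [1..<Suc n]"
  have v: "order_stat n T k \<omega> = sort ?xs ! (k-1)" using assms by (simp add: order_stat_def)
  have L: "k \<le> length (sort ?xs)" using assms by simp
  show "card {j\<in>{1..n}. T j \<omega> < order_stat n T k \<omega>} < k"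
    using sorted_kth(1)[OF sorted_sort assms(1) L] v
    by (simp only: sort_filter_len len_filter_map_card)
  show "k \<le> card {j\<in>{1..n}. T j \<omega> \<le> order_stat n T k \<omega>}"
    using sorted_kth(2)[OF sorted_sort assms(1) L] v
    by (simp only: sort_filter_len len_filter_map_card)
qed




locale setting = prob_space M for M :: "'a measure" +
  fixes n :: nat and T :: "nat \<Rightarrow> 'a \<Rightarrow> real"
  assumes n1: "n \<ge> 1"
    and rv: "\<And>j. j \<in> {1..n} \<Longrightarrow> T j \<in> borel_measurable M"
    and nonneg: "\<And>j \<omega>. j \<in> {1..n} \<Longrightarrow> \<omega> \<in> space M \<Longrightarrow> 0 \<le> T j \<omega>"
    and indep: "indep_vars (\<lambda>_. borel) T {1..n}"
    and ident: "\<And>j. j \<in> {1..n} \<Longrightarrow> distr M borel (T j) = distr M borel (T 1)"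
    and cont: "\<And>t. measure M {\<omega> \<in> space M. T 1 \<omega> = t} = 0"
begin

lemma rv1[measurable]: "T 1 \<in> borel_measurable M" by (rule rv) (use n1 in auto)

lemma D_single:
  assumes j: "j \<in> {1..n}"
  shows "emeasure (distr M borel (T j)) {x} = 0"
proof -
  have "emeasure (distr M borel (T j)) {x} = emeasure (distr M borel (T 1)) {x}"
    using ident[OF j] by simp
  also have "\<dots> = emeasure M (T 1 -` {x} \<inter> space M)"
    by (rule emeasure_distr[OF rv1]) auto
  also have "T 1 -` {x} \<inter> space M = {\<omega> \<in> space M. T 1 \<omega> = x}" by auto
  also have "emeasure M \<dots> = ennreal (measure M {\<omega> \<in> space M. T 1 \<omega> = x})"
    by (rule emeasure_eq_measure)
  finally show ?thesis using cont by simp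
qed

lemma iv2:
  assumes "i \<in> {1..n}" "j \<in> {1..n}" "i \<noteq> j"
  shows "indep_var borel (T i) borel (T j)"
proof -
  have "indep_var (PiM {i} (\<lambda>_. borel)) (\<lambda>\<omega>. restrict (\<lambda>k. T k \<omega>) {i})
                  (PiM {j} (\<lambda>_. borel)) (\<lambda>\<omega>. restrict (\<lambda>k. T k \<omega>) {j})"
    using assms by (intro indep_var_restrict[OF indep]) auto
  then have "indep_var borel ((\<lambda>f. f i) \<circ> (\<lambda>\<omega>. restrict (\<lambda>k. T k \<omega>) {i}))
                  borel ((\<lambda>f. f j) \<circ> (\<lambda>\<omega>. restrict (\<lambda>k. T k \<omega>) {j}))"
    by (rule indep_var_compose) (auto intro!: measurable_component_singleton)
  moreover have "((\<lambda>f. f i) \<circ> (\<lambda>\<omega>. restrict (\<lambda>k. T k \<omega>) {i})) = T i"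
    "((\<lambda>f. f j) \<circ> (\<lambda>\<omega>. restrict (\<lambda>k. T k \<omega>) {j})) = T j" by (auto simp: fun_eq_iff)
  ultimately show ?thesis by simp
qed

lemma ties_null:
  assumes i: "i \<in> {1..n}" and j: "j \<in> {1..n}" and ij: "i \<noteq> j"
  shows "emeasure M {\<omega>\<in>space M. T i \<omega> = T j \<omega>} = 0"
proof -
  have mi[measurable]: "T i \<in> borel_measurable M" and mj[measurable]: "T j \<in> borel_measurable M"
    using rv i j by auto
  let ?Di = "distr M borel (T i)" and ?Dj = "distr M borel (T j)"
  let ?Z = "{p::real\<times>real. fst p = snd p}"
  have "?Z = {p \<in> space (borel \<Otimes>\<^sub>M borel). fst p = snd p}" by (simp add: space_pair_measure)
  also have "\<dots> \<in> sets (borel \<Otimes>\<^sub>M borel)" by measurable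
  finally have Zm: "?Z \<in> sets (borel \<Otimes>\<^sub>M borel)" .
  have eq: "?Di \<Otimes>\<^sub>M ?Dj = distr M (borel \<Otimes>\<^sub>M borel) (\<lambda>x. (T i x, T j x))"
    using iv2[OF i j ij] unfolding indep_var_distribution_eq by auto
  have "emeasure M {\<omega>\<in>space M. T i \<omega> = T j \<omega>} =
        emeasure (distr M (borel \<Otimes>\<^sub>M borel) (\<lambda>x. (T i x, T j x))) ?Z"
    by (subst emeasure_distr) (auto intro!: arg_cong2[where f=emeasure] simp: Zm)
  also have "\<dots> = emeasure (?Di \<Otimes>\<^sub>M ?Dj) ?Z" using eq by simp
  also have "\<dots> = (\<integral>\<^sup>+x. emeasure ?Dj (Pair x -` ?Z) \<partial>?Di)"
  proof -
    interpret Dj: prob_space ?Dj by (rule prob_space_distr) simp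
    show ?thesis by (rule Dj.emeasure_pair_measure_alt) (simp add: Zm)
  qed
  also have "\<dots> = (\<integral>\<^sup>+x. 0 \<partial>?Di)"
  proof (rule nn_integral_cong)
    fix x have "Pair x -` ?Z = {x}" by auto
    then show "emeasure ?Dj (Pair x -` ?Z) = 0" using D_single[OF j] by simp
  qed
  finally show ?thesis by simp
qed

lemma zero_null:
  assumes j: "j \<in> {1..n}"
  shows "emeasure M {\<omega>\<in>space M. T j \<omega> = 0} = 0"
proof -
  have mj[measurable]: "T j \<in> borel_measurable M" using rv j by auto
  have "emeasure M {\<omega>\<in>space M. T j \<omega> = 0} = emeasure (distr M borel (T j)) {0}"
    by (subst emeasure_distr) (auto intro!: arg_cong2[where f=emeasure])
  then show ?thesis using D_single[OF j] by simp
qed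

definition G where
  "G = {\<omega>\<in>space M. (\<forall>i\<in>{1..n}. \<forall>j\<in>{1..n}. i \<noteq> j \<longrightarrow> T i \<omega> \<noteq> T j \<omega>) \<and> (\<forall>j\<in>{1..n}. T j \<omega> \<noteq> 0)}"

lemma G_sets: "G \<in> sets M"
proof -
  have [measurable]: "\<And>j. j \<in> {1..n} \<Longrightarrow> T j \<in> borel_measurable M" using rv by auto
  show ?thesis unfolding G_def by measurable
qed

lemma AE_G: "AE \<omega> in M. \<omega> \<in> G"
proof -
  have 1: "AE \<omega> in M. \<forall>i\<in>{1..n}. \<forall>j\<in>{1..n}. i \<noteq> j \<longrightarrow> T i \<omega> \<noteq> T j \<omega>"
  proof (intro AE_finite_allI finite_atLeastAtMost)
    fix i j assume i: "i \<in> {1..n}" and j: "j \<in> {1..n}"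
    have [measurable]: "T i \<in> borel_measurable M" "T j \<in> borel_measurable M" using rv i j by auto
    show "AE \<omega> in M. i \<noteq> j \<longrightarrow> T i \<omega> \<noteq> T j \<omega>"
    proof (cases "i = j")
      case False
      show ?thesis
        by (subst AE_iff_measurable[where N="{\<omega>\<in>space M. T i \<omega> = T j \<omega>}"])
           (auto simp: False ties_null[OF i j False])
    qed simp
  qed
  have 2: "AE \<omega> in M. \<forall>j\<in>{1..n}. T j \<omega> \<noteq> 0"
  proof (intro AE_finite_allI finite_atLeastAtMost)
    fix j assume j: "j \<in> {1..n}"
    have [measurable]: "T j \<in> borel_measurable M" using rv j by auto
    show "AE \<omega> in M. T j \<omega> \<noteq> 0"
      by (subst AE_iff_measurable[where N="{\<omega>\<in>space M. T j \<omega> = 0}"])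
         (auto simp: zero_null[OF j])
  qed
  from 1 2 show ?thesis by (auto simp: G_def)
qed

end



context setting begin

definition E where "E A \<omega> \<longleftrightarrow> (\<forall>a\<in>A. \<forall>c\<in>{1..n}-A. T c \<omega> < T a \<omega>)"
definition r where "r j \<omega> = card {i\<in>{1..n}. T i \<omega> < T j \<omega>}"
definition R where "R k \<omega> = (if k = 0 then {j\<in>{1..n}. 0 < T j \<omega>} else {j\<in>{1..n}. k \<le> r j \<omega>})"

lemma E_unique:
  assumes "A \<subseteq> {1..n}" "A' \<subseteq> {1..n}" "card A = card A'" "E A \<omega>" "E A' \<omega>"
  shows "A = A'"
proof (rule ccontr)
  assume ne: "A \<noteq> A'"
  have fA: "finite A" "finite A'" using assms(1,2) finite_subset by auto
  have "\<not> A \<subseteq> A'" using ne fA assms(3) card_subset_eq by blast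
  then obtain x where x: "x \<in> A" "x \<notin> A'" by auto
  have "\<not> A' \<subseteq> A" using ne fA assms(3) card_subset_eq by metis
  then obtain y where y: "y \<in> A'" "y \<notin> A" by auto
  have "T y \<omega> < T x \<omega>" using assms(4) x y assms(2) unfolding E_def by auto
  moreover have "T x \<omega> < T y \<omega>" using assms(5) x y assms(1) unfolding E_def by auto
  ultimately show False by simp
qed

lemma E_nested:
  assumes "A \<subseteq> {1..n}" "B \<subseteq> {1..n}" "E A \<omega>" "E B \<omega>"
  shows "A \<subseteq> B \<or> B \<subseteq> A"
proof (rule ccontr)
  assume "\<not> (A \<subseteq> B \<or> B \<subseteq> A)"
  then obtain x y where x: "x \<in> A" "x \<notin> B" and y: "y \<in> B" "y \<notin> A" by auto
  have "T y \<omega> < T x \<omega>" using assms(3) x y assms(2) unfolding E_def by auto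
  moreover have "T x \<omega> < T y \<omega>" using assms(4) x y assms(1) unfolding E_def by auto
  ultimately show False by simp
qed

lemma state_R:
  assumes "k \<le> n"
  shows "state_set n T (order_stat n T k \<omega>) \<omega> = R k \<omega>"
proof (cases "k = 0")
  case True then show ?thesis by (simp add: state_set_def order_stat_def R_def)
next
  case False
  let ?v = "order_stat n T k \<omega>"
  have lt: "card {j\<in>{1..n}. T j \<omega> < ?v} < k" and le: "k \<le> card {j\<in>{1..n}. T j \<omega> \<le> ?v}"
    using order_stat_prop[of k n T \<omega>] False assms by auto
  have "?v < T j \<omega> \<longleftrightarrow> k \<le> r j \<omega>" if j: "j \<in> {1..n}" for j
  proof
    assume "?v < T j \<omega>"
    then have "{i\<in>{1..n}. T i \<omega> \<le> ?v} \<subseteq> {i\<in>{1..n}. T i \<omega> < T j \<omega>}" by auto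
    then have "card {i\<in>{1..n}. T i \<omega> \<le> ?v} \<le> r j \<omega>" unfolding r_def by (intro card_mono) auto
    then show "k \<le> r j \<omega>" using le by simp
  next
    assume k: "k \<le> r j \<omega>"
    show "?v < T j \<omega>"
    proof (rule ccontr)
      assume "\<not> ?v < T j \<omega>"
      then have "{i\<in>{1..n}. T i \<omega> < T j \<omega>} \<subseteq> {i\<in>{1..n}. T i \<omega> < ?v}" by auto
      then have "r j \<omega> \<le> card {i\<in>{1..n}. T i \<omega> < ?v}" unfolding r_def by (intro card_mono) auto
      then show False using lt k by simp
    qed
  qed
  then show ?thesis using False by (auto simp: state_set_def R_def)
qed

lemma r_mono:
  assumes "i \<in> {1..n}" "j \<in> {1..n}" "T i \<omega> < T j \<omega>"
  shows "r i \<omega> < r j \<omega>"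
proof -
  have "{l\<in>{1..n}. T l \<omega> < T i \<omega>} \<subset> {l\<in>{1..n}. T l \<omega> < T j \<omega>}"
    using assms by auto
  then show ?thesis unfolding r_def by (intro psubset_card_mono) auto
qed

lemma r_less: assumes "j \<in> {1..n}" shows "r j \<omega> < n"
proof -
  have "{l\<in>{1..n}. T l \<omega> < T j \<omega>} \<subseteq> {1..n} - {j}" by auto
  then have "r j \<omega> \<le> card ({1..n} - {j})" unfolding r_def by (intro card_mono) auto
  also have "\<dots> = n - 1" using assms by simp
  finally show ?thesis using n1 by simp
qed

lemma R_good:
  assumes \<omega>: "\<omega> \<in> G" and k: "k \<le> n"
  shows "R k \<omega> \<subseteq> {1..n}" "card (R k \<omega>) = n - k" "E (R k \<omega>) \<omega>"
proof -
  have sp: "\<omega> \<in> space M" and dis: "\<And>i j. i \<in> {1..n} \<Longrightarrow> j \<in> {1..n} \<Longrightarrow> i \<noteq> j \<Longrightarrow> T i \<omega> \<noteq> T j \<omega>"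
    and nz: "\<And>j. j \<in> {1..n} \<Longrightarrow> T j \<omega> \<noteq> 0" using \<omega> by (auto simp: G_def)
  show "R k \<omega> \<subseteq> {1..n}" by (auto simp: R_def)
  have "card (R k \<omega>) = n - k \<and> E (R k \<omega>) \<omega>"
  proof (cases "k = 0")
    case True
    have "R k \<omega> = {1..n}" using True nonneg[OF _ sp] nz by (force simp: R_def)
    then show ?thesis using True by (simp add: E_def)
  next
    case False
    have inj: "inj_on (\<lambda>j. r j \<omega>) {1..n}"
    proof (rule inj_onI)
      fix i j assume i: "i \<in> {1..n}" and j: "j \<in> {1..n}" and eq: "r i \<omega> = r j \<omega>"
      show "i = j"
      proof (rule ccontr)
        assume "i \<noteq> j"
        then have "T i \<omega> < T j \<omega> \<or> T j \<omega> < T i \<omega>" using dis[OF i j] by linarith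
        then show False
        proof
          assume "T i \<omega> < T j \<omega>" then have "r i \<omega> < r j \<omega>" by (rule r_mono[OF i j])
          then show False using eq by simp
        next
          assume "T j \<omega> < T i \<omega>" then have "r j \<omega> < r i \<omega>" by (rule r_mono[OF j i])
          then show False using eq by simp
        qed
      qed
    qed
    have img: "(\<lambda>j. r j \<omega>) ` {1..n} = {0..<n}"
    proof (rule card_subset_eq)
      show "(\<lambda>j. r j \<omega>) ` {1..n} \<subseteq> {0..<n}" using r_less by auto
      show "card ((\<lambda>j. r j \<omega>) ` {1..n}) = card {0..<n}" using card_image[OF inj] by simp
    qed simp
    have Rk: "R k \<omega> = {j\<in>{1..n}. k \<le> r j \<omega>}" using False by (simp add: R_def)
    have "(\<lambda>j. r j \<omega>) ` R k \<omega> = {k..<n}"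
    proof -
      have "(\<lambda>j. r j \<omega>) ` R k \<omega> = {x \<in> (\<lambda>j. r j \<omega>) ` {1..n}. k \<le> x}" unfolding Rk by auto
      also have "\<dots> = {k..<n}" unfolding img by auto
      finally show ?thesis .
    qed
    moreover have "card ((\<lambda>j. r j \<omega>) ` R k \<omega>) = card (R k \<omega>)"
      by (rule card_image) (rule inj_on_subset[OF inj], auto simp: Rk)
    ultimately have c: "card (R k \<omega>) = n - k" by simp
    have "E (R k \<omega>) \<omega>" unfolding E_def
    proof (intro ballI)
      fix a c assume a: "a \<in> R k \<omega>" and c: "c \<in> {1..n} - R k \<omega>"
      have ai: "a \<in> {1..n}" and ra: "k \<le> r a \<omega>" using a unfolding Rk by simp_all
      have ci: "c \<in> {1..n}" and cR: "c \<notin> R k \<omega>" using c by simp_all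
      have rc: "r c \<omega> < k"
      proof (rule ccontr)
        assume "\<not> r c \<omega> < k"
        then have "c \<in> R k \<omega>" using ci unfolding Rk by simp
        then show False using cR by simp
      qed
      have "a \<noteq> c" using ra rc by auto
      show "T c \<omega> < T a \<omega>"
      proof (rule ccontr)
        assume "\<not> T c \<omega> < T a \<omega>"
        then have "T a \<omega> < T c \<omega>" using dis[OF ai ci \<open>a \<noteq> c\<close>] by linarith
        then have "r a \<omega> < r c \<omega>" by (rule r_mono[OF ai ci])
        then show False using ra rc by simp
      qed
    qed
    then show ?thesis using c by simp
  qed
  then show "card (R k \<omega>) = n - k" "E (R k \<omega>) \<omega>" by auto
qed

end



context setting begin

lemma Tm: "j \<in> {1..n} \<Longrightarrow> T j \<in> borel_measurable M" by (rule rv)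

lemma pred_lt: assumes "a \<in> {1..n}" "c \<in> {1..n}" shows "Measurable.pred M (\<lambda>\<omega>. T c \<omega> < T a \<omega>)"
  unfolding pred_def by (rule borel_measurable_less) (use assms Tm in auto)

lemma pred_lt0: assumes "a \<in> {1..n}" shows "Measurable.pred M (\<lambda>\<omega>. 0 < T a \<omega>)"
  unfolding pred_def by (rule borel_measurable_less) (use assms Tm in auto)

lemma pred_E: assumes "A \<subseteq> {1..n}" shows "Measurable.pred M (E A)"
proof -
  have fA: "finite A" using assms finite_subset by auto
  have "Measurable.pred M (\<lambda>\<omega>. \<forall>a\<in>A. \<forall>c\<in>{1..n}-A. T c \<omega> < T a \<omega>)"
    using assms fA n1 by (intro pred_intros_finite pred_lt) auto
  then show ?thesis unfolding E_def[abs_def] .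
qed

lemma pred_R_mem: assumes j: "j \<in> {1..n}" shows "Measurable.pred M (\<lambda>\<omega>. j \<in> R k \<omega>)"
proof (cases "k = 0")
  case True
  then show ?thesis using pred_lt0[OF j] j by (simp add: R_def)
next
  case False
  let ?F = "{S. S \<subseteq> {1..n} \<and> card S = k}"
  have "j \<in> R k \<omega> \<longleftrightarrow> (\<exists>S\<in>?F. \<forall>i\<in>S. T i \<omega> < T j \<omega>)" for \<omega>
  proof
    assume "j \<in> R k \<omega>"
    then have "k \<le> card {i\<in>{1..n}. T i \<omega> < T j \<omega>}" using False by (simp add: R_def r_def)
    then obtain S where "S \<subseteq> {i\<in>{1..n}. T i \<omega> < T j \<omega>}" "card S = k"
      by (meson obtain_subset_with_card_n)
    then show "\<exists>S\<in>?F. \<forall>i\<in>S. T i \<omega> < T j \<omega>" by (intro bexI[of _ S]) auto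
  next
    assume "\<exists>S\<in>?F. \<forall>i\<in>S. T i \<omega> < T j \<omega>"
    then obtain S where S: "S \<subseteq> {1..n}" "card S = k" "\<forall>i\<in>S. T i \<omega> < T j \<omega>" by auto
    then have "S \<subseteq> {i\<in>{1..n}. T i \<omega> < T j \<omega>}" by auto
    then have "k \<le> r j \<omega>" unfolding r_def using S(2) by (metis (no_types, lifting) card_mono finite_atLeastAtMost finite_subset mem_Collect_eq subsetI)
    then show "j \<in> R k \<omega>" using j False by (simp add: R_def)
  qed
  moreover have "Measurable.pred M (\<lambda>\<omega>. \<exists>S\<in>?F. \<forall>i\<in>S. T i \<omega> < T j \<omega>)"
  proof (intro pred_intros_finite)
    show "finite ?F" by (rule finite_subset[of _ "Pow {1..n}"]) auto
    fix S i assume "S \<in> ?F" "i \<in> S"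
    then show "Measurable.pred M (\<lambda>\<omega>. T i \<omega> < T j \<omega>)" using j by (intro pred_lt) auto
  next
    fix S assume "S \<in> ?F"
    then show "finite S" using finite_subset by auto
  qed
  ultimately show ?thesis by simp
qed

lemma R_sub: "R k \<omega> \<subseteq> {1..n}" by (auto simp: R_def)

lemma pred_R_eq: "Measurable.pred M (\<lambda>\<omega>. R k \<omega> = S)"
proof (cases "S \<subseteq> {1..n}")
  case True
  have "R k \<omega> = S \<longleftrightarrow> (\<forall>j\<in>{1..n}. j \<in> R k \<omega> \<longleftrightarrow> j \<in> S)" for \<omega>
    using True R_sub[of k \<omega>] by blast
  moreover have "Measurable.pred M (\<lambda>\<omega>. \<forall>j\<in>{1..n}. j \<in> R k \<omega> \<longleftrightarrow> j \<in> S)"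
    by (intro pred_intros_finite pred_intros_logic pred_R_mem finite_atLeastAtMost) (use n1 in auto)
  ultimately show ?thesis by simp
next
  case False
  then have "R k \<omega> \<noteq> S" for \<omega> using R_sub[of k \<omega>] by auto
  then show ?thesis by simp
qed

lemma E_perm:
  assumes \<pi>: "bij_betw \<pi> {1..n} {1..n}" and A: "A \<subseteq> {1..n}"
  shows "(\<forall>a\<in>A. \<forall>c\<in>{1..n}-A. T (\<pi> c) \<omega> < T (\<pi> a) \<omega>) \<longleftrightarrow> E (\<pi>`A) \<omega>"
proof -
  have "\<pi> ` ({1..n} - A) = \<pi> ` {1..n} - \<pi> ` A"
    using \<pi> A by (intro inj_on_image_set_diff) (auto simp: bij_betw_def)
  also have "\<dots> = {1..n} - \<pi> ` A" using \<pi> by (simp add: bij_betw_def)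
  finally have eq: "{1..n} - \<pi> ` A = \<pi> ` ({1..n} - A)" by simp
  show ?thesis unfolding E_def eq by auto
qed

lemma exch:
  assumes \<pi>: "bij_betw \<pi> {1..n} {1..n}" and A: "A \<subseteq> {1..n}" and B: "B \<subseteq> {1..n}"
  shows "measure M ({\<omega>\<in>space M. E (\<pi>`A) \<omega>} \<inter> {\<omega>\<in>space M. E (\<pi>`B) \<omega>})
       = measure M ({\<omega>\<in>space M. E A \<omega>} \<inter> {\<omega>\<in>space M. E B \<omega>})"
proof -
  let ?I = "{1..n}"
  let ?PB = "PiM ?I (\<lambda>_. borel :: real measure)"
  define D where "D = distr M borel (T 1)"
  define V where "V = (\<lambda>\<omega>. \<lambda>j\<in>?I. T j \<omega>)"
  define W where "W = (\<lambda>\<omega>. \<lambda>j\<in>?I. T (\<pi> j) \<omega>)"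
  define g where "g = (\<lambda>x::nat\<Rightarrow>real. \<lambda>j\<in>?I. x (\<pi> j))"
  have pim: "\<pi> j \<in> ?I" if "j \<in> ?I" for j using \<pi> that by (auto simp: bij_betw_def)
  have Vm: "V \<in> measurable M ?PB" unfolding V_def by (intro measurable_restrict Tm)
  have Wm: "W \<in> measurable M ?PB" unfolding W_def by (intro measurable_restrict Tm pim)
  have gm: "g \<in> measurable ?PB ?PB" unfolding g_def
    by (intro measurable_restrict measurable_component_singleton pim)
  have Dps: "prob_space D" unfolding D_def by (rule prob_space_distr) (rule Tm, use n1 in auto)
  have sD: "sets D = sets borel" by (simp add: D_def)
  have lawV: "distr M ?PB V = PiM ?I (\<lambda>_. D)"
  proof -
    have "distr M ?PB V = PiM ?I (\<lambda>i. distr M borel (T i))"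
      unfolding V_def using indep
      by (subst indep_vars_iff_distr_eq_PiM'[symmetric]) (use n1 Tm in auto)
    also have "\<dots> = PiM ?I (\<lambda>_. D)" unfolding D_def by (rule PiM_cong) (rule refl, erule ident)
    finally show ?thesis .
  qed
  have lawW: "distr M ?PB W = PiM ?I (\<lambda>_. D)"
  proof -
    have pim2: "\<And>j. Suc 0 \<le> j \<Longrightarrow> j \<le> n \<Longrightarrow> Suc 0 \<le> \<pi> j \<and> \<pi> j \<le> n" using pim by auto
    have WgV: "W = g \<circ> V" by (auto simp: fun_eq_iff g_def V_def W_def pim2)
    have "distr M ?PB W = distr M ?PB (g \<circ> V)" by (simp only: WgV)
    also have "\<dots> = distr (distr M ?PB V) ?PB g" by (rule distr_distr[symmetric, OF gm Vm])
    also have "\<dots> = distr (PiM ?I (\<lambda>_. D)) (PiM ?I (\<lambda>_. D)) g"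
      unfolding lawV by (intro distr_cong refl sets_PiM_cong) (simp add: sD)
    also have "\<dots> = PiM ?I (\<lambda>_. D)"
      unfolding g_def by (rule distr_PiM_reindex) (use Dps \<pi> pim in \<open>auto simp: bij_betw_def\<close>)
    finally show ?thesis .
  qed
  define X where "X = {x\<in>space ?PB. (\<forall>a\<in>A. \<forall>c\<in>?I-A. x c < x a) \<and> (\<forall>a\<in>B. \<forall>c\<in>?I-B. x c < x a)}"
  have Xs: "X \<in> sets ?PB"
  proof -
    have fA: "finite A" "finite B" using A B finite_subset by auto
    have cm: "Measurable.pred ?PB (\<lambda>x. x c < x a)" if "a \<in> ?I" "c \<in> ?I" for a c
      unfolding Measurable.pred_def
      by (rule borel_measurable_less) (rule measurable_component_singleton, use that in simp)+
    have "Measurable.pred ?PB (\<lambda>x. (\<forall>a\<in>A. \<forall>c\<in>?I-A. x c < x a) \<and> (\<forall>a\<in>B. \<forall>c\<in>?I-B. x c < x a))"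
      using A B fA by (intro pred_intros_finite pred_intros_logic cm) auto
    then show ?thesis unfolding X_def Measurable.pred_def .
  qed
  have spV: "V \<omega> \<in> space ?PB" "W \<omega> \<in> space ?PB" for \<omega>
    by (auto simp: V_def W_def space_PiM)
  have Vc: "(\<forall>a\<in>C. \<forall>c\<in>?I-C. V \<omega> c < V \<omega> a) \<longleftrightarrow> E C \<omega>" if "C \<subseteq> ?I" for C \<omega>
    using that unfolding E_def V_def by (auto simp: subset_iff)
  have Wc: "(\<forall>a\<in>C. \<forall>c\<in>?I-C. W \<omega> c < W \<omega> a) \<longleftrightarrow> (\<forall>a\<in>C. \<forall>c\<in>?I-C. T (\<pi> c) \<omega> < T (\<pi> a) \<omega>)"
    if "C \<subseteq> ?I" for C \<omega>
    using that unfolding W_def by (auto simp: subset_iff)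
  have "V -` X \<inter> space M = {\<omega>\<in>space M. E A \<omega>} \<inter> {\<omega>\<in>space M. E B \<omega>}"
    using spV Vc[OF A] Vc[OF B] unfolding X_def by auto
  moreover have "W -` X \<inter> space M = {\<omega>\<in>space M. E (\<pi>`A) \<omega>} \<inter> {\<omega>\<in>space M. E (\<pi>`B) \<omega>}"
  proof -
    have "W -` X \<inter> space M = {\<omega>\<in>space M. (\<forall>a\<in>A. \<forall>c\<in>?I-A. T (\<pi> c) \<omega> < T (\<pi> a) \<omega>) \<and>
              (\<forall>a\<in>B. \<forall>c\<in>?I-B. T (\<pi> c) \<omega> < T (\<pi> a) \<omega>)}"
      using spV Wc[OF A] Wc[OF B] unfolding X_def by auto
    then show ?thesis using E_perm[OF \<pi> A] E_perm[OF \<pi> B] by auto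
  qed
  ultimately show ?thesis
    using measure_distr[OF Vm Xs] measure_distr[OF Wm Xs] lawV lawW by simp
qed

end



lemma perm_exists:
  assumes fI: "finite I" and BA: "B \<subseteq> A" and AI: "A \<subseteq> I" and BA': "B' \<subseteq> A'" and AI': "A' \<subseteq> I"
    and cA: "card A = card A'" and cB: "card B = card B'"
  shows "\<exists>\<pi>. bij_betw \<pi> I I \<and> \<pi>`A = A' \<and> \<pi>`B = B'"
proof -
  have fA: "finite A" using finite_subset[OF AI fI] .
  have fA': "finite A'" using finite_subset[OF AI' fI] .
  have fB: "finite B" using finite_subset[OF BA fA] .
  have fB': "finite B'" using finite_subset[OF BA' fA'] .
  note fin = fA fB fA' fB'
  obtain f1 where f1: "bij_betw f1 B B'" using finite_same_card_bij[OF fB fB' cB] by blast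
  have "card (A - B) = card (A' - B')"
    using fin BA BA' cA cB by (simp add: card_Diff_subset)
  then obtain f2 where f2: "bij_betw f2 (A - B) (A' - B')"
    using finite_same_card_bij[OF finite_Diff[OF fA] finite_Diff[OF fA']] by blast
  have "card (I - A) = card (I - A')"
    using fin AI AI' cA by (simp add: card_Diff_subset)
  then obtain f3 where f3: "bij_betw f3 (I - A) (I - A')"
    using finite_same_card_bij[OF finite_Diff[OF fI] finite_Diff[OF fI]] by blast
  define \<pi> where "\<pi> x = (if x \<in> B then f1 x else if x \<in> A then f2 x else f3 x)" for x
  have h1: "bij_betw \<pi> B B'"
    using f1 by (subst bij_betw_cong[of B \<pi> f1]) (auto simp: \<pi>_def)
  have h2: "bij_betw \<pi> (A - B) (A' - B')"
    using f2 by (subst bij_betw_cong[of "A - B" \<pi> f2]) (auto simp: \<pi>_def)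
  have h3: "bij_betw \<pi> (I - A) (I - A')"
    using f3 BA by (subst bij_betw_cong[of "I - A" \<pi> f3]) (auto simp: \<pi>_def)
  have h12: "bij_betw \<pi> (B \<union> (A - B)) (B' \<union> (A' - B'))"
    by (rule bij_betw_combine[OF h1 h2]) auto
  have eA: "B \<union> (A - B) = A" "B' \<union> (A' - B') = A'" using BA BA' by auto
  have h12': "bij_betw \<pi> A A'" using h12 eA by simp
  have "bij_betw \<pi> (A \<union> (I - A)) (A' \<union> (I - A'))"
    by (rule bij_betw_combine[OF h12' h3]) auto
  moreover have "A \<union> (I - A) = I" "A' \<union> (I - A') = I" using AI AI' by auto
  ultimately have "bij_betw \<pi> I I" by simp
  moreover have "\<pi>`A = A'" using h12' by (simp add: bij_betw_def)
  moreover have "\<pi>`B = B'" using h1 by (simp add: bij_betw_def)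
  ultimately show ?thesis by blast
qed

lemma card_nested_pairs:
  assumes "finite I"
  shows "card {p. fst p \<subseteq> I \<and> card (fst p) = a \<and> snd p \<subseteq> fst p \<and> card (snd p) = b}
         = (card I choose a) * (a choose b)"
proof -
  have eq: "{p. fst p \<subseteq> I \<and> card (fst p) = a \<and> snd p \<subseteq> fst p \<and> card (snd p) = b}
        = Sigma {A. A \<subseteq> I \<and> card A = a} (\<lambda>A. {B. B \<subseteq> A \<and> card B = b})" by auto
  have fA: "finite {A. A \<subseteq> I \<and> card A = a}" by (rule finite_subset[of _ "Pow I"]) (use assms in auto)
  have fB: "finite {B. B \<subseteq> A \<and> card B = b}" if "A \<subseteq> I" for A
  proof -
    have "finite A" using finite_subset[OF that assms] .
    then show ?thesis by (intro finite_subset[of _ "Pow A", OF _ finite_Pow_iff[THEN iffD2]]) auto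
  qed
  have "card (Sigma {A. A \<subseteq> I \<and> card A = a} (\<lambda>A. {B. B \<subseteq> A \<and> card B = b}))
        = (\<Sum>A\<in>{A. A \<subseteq> I \<and> card A = a}. card {B. B \<subseteq> A \<and> card B = b})"
    using fA fB by (intro card_SigmaI) auto
  also have "\<dots> = (\<Sum>A\<in>{A. A \<subseteq> I \<and> card A = a}. a choose b)"
  proof (rule sum.cong[OF refl])
    fix A assume "A \<in> {A. A \<subseteq> I \<and> card A = a}"
    then have A: "A \<subseteq> I" "card A = a" by auto
    show "card {B. B \<subseteq> A \<and> card B = b} = a choose b"
      using n_subsets[OF finite_subset[OF A(1) assms]] A(2) by simp
  qed
  also have "\<dots> = (card I choose a) * (a choose b)"
    using assms by (simp add: n_subsets)
  finally show ?thesis using eq by simp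
qed

lemma q0_sym: "q0 n A B = q0 n B A"
  unfolding q0_def by (auto dest: subset_antisym)

context setting begin

definition P2 where "P2 A B = measure M ({\<omega>\<in>space M. E A \<omega>} \<inter> {\<omega>\<in>space M. E B \<omega>})"

lemma EV_sets: "A \<subseteq> {1..n} \<Longrightarrow> {\<omega>\<in>space M. E A \<omega>} \<in> sets M"
  using pred_E unfolding Measurable.pred_def by blast

lemma prob_G: "prob G = 1"
  using prob_eq_1[OF G_sets] AE_G by simp

definition PP where "PP a b = {p. fst p \<subseteq> {1..n} \<and> card (fst p) = a \<and> snd p \<subseteq> {1..n} \<and> card (snd p) = b}"

lemma PP_finite: "finite (PP a b)"
  by (rule finite_subset[of _ "Pow {1..n} \<times> Pow {1..n}"]) (auto simp: PP_def)

lemma disj_PP: "disjoint_family_on (\<lambda>p. {\<omega>\<in>space M. E (fst p) \<omega>} \<inter> {\<omega>\<in>space M. E (snd p) \<omega>}) (PP a b)"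
  unfolding disjoint_family_on_def
proof (intro ballI impI)
  fix p q assume p: "p \<in> PP a b" and q: "q \<in> PP a b" and pq: "p \<noteq> q"
  show "{\<omega>\<in>space M. E (fst p) \<omega>} \<inter> {\<omega>\<in>space M. E (snd p) \<omega>} \<inter>
        ({\<omega>\<in>space M. E (fst q) \<omega>} \<inter> {\<omega>\<in>space M. E (snd q) \<omega>}) = {}"
  proof (rule ccontr)
    assume "\<not> ?thesis"
    then obtain \<omega> where w: "E (fst p) \<omega>" "E (snd p) \<omega>" "E (fst q) \<omega>" "E (snd q) \<omega>" by blast
    have "fst p = fst q" using p q w by (intro E_unique[of _ _ \<omega>]) (auto simp: PP_def)
    moreover have "snd p = snd q" using p q w by (intro E_unique[of _ _ \<omega>]) (auto simp: PP_def)
    ultimately show False using pq by (simp add: prod_eq_iff)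
  qed
qed

lemma sum_one:
  assumes "a \<le> n" "b \<le> n"
  shows "(\<Sum>p\<in>PP a b. P2 (fst p) (snd p)) = 1"
proof -
  let ?F = "\<lambda>p. {\<omega>\<in>space M. E (fst p) \<omega>} \<inter> {\<omega>\<in>space M. E (snd p) \<omega>}"
  have Fs: "?F p \<in> sets M" if "p \<in> PP a b" for p
    using that EV_sets by (auto simp: PP_def)
  have "prob (\<Union>p\<in>PP a b. ?F p) = (\<Sum>p\<in>PP a b. prob (?F p))"
    by (rule measure_finite_Union[OF PP_finite _ disj_PP]) (use Fs in auto)
  moreover have "prob (\<Union>p\<in>PP a b. ?F p) = 1"
  proof (rule antisym)
    show "prob (\<Union>p\<in>PP a b. ?F p) \<le> 1" by (rule prob_le_1)
    have "G \<subseteq> (\<Union>p\<in>PP a b. ?F p)"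
    proof
      fix \<omega> assume w: "\<omega> \<in> G"
      then have sp: "\<omega> \<in> space M" by (simp add: G_def)
      let ?p = "(R (n - a) \<omega>, R (n - b) \<omega>)"
      have "?p \<in> PP a b" using R_good[OF w, of "n-a"] R_good[OF w, of "n-b"] assms by (auto simp: PP_def)
      moreover have "\<omega> \<in> ?F ?p" using R_good[OF w, of "n-a"] R_good[OF w, of "n-b"] sp by auto
      ultimately show "\<omega> \<in> (\<Union>p\<in>PP a b. ?F p)" by blast
    qed
    then have "prob G \<le> prob (\<Union>p\<in>PP a b. ?F p)"
      by (intro finite_measure_mono) (use Fs PP_finite in auto)
    then show "1 \<le> prob (\<Union>p\<in>PP a b. ?F p)" using prob_G by simp
  qed
  ultimately show ?thesis by (simp add: P2_def)
qed

end



context setting begin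

lemma key_nested:
  assumes BA: "B \<subseteq> A" and AI: "A \<subseteq> {1..n}"
  shows "P2 A B = q0 n A B"
proof -
  define a where "a = card A"
  define b where "b = card B"
  have fA: "finite A" using finite_subset[OF AI] by simp
  have fB: "finite B" using finite_subset[OF BA fA] .
  have ba: "b \<le> a" unfolding a_def b_def using card_mono[OF fA BA] .
  have an: "a \<le> n" unfolding a_def using card_mono[OF _ AI] by simp
  define Q where "Q = {p. fst p \<subseteq> {1..n} \<and> card (fst p) = a \<and> snd p \<subseteq> fst p \<and> card (snd p) = b}"
  have QPP: "Q \<subseteq> PP a b" unfolding Q_def PP_def by auto
  have zero: "P2 (fst p) (snd p) = 0" if p: "p \<in> PP a b - Q" for p
  proof -
    have "{\<omega>\<in>space M. E (fst p) \<omega>} \<inter> {\<omega>\<in>space M. E (snd p) \<omega>} = {}"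
    proof (rule ccontr)
      assume "\<not> ?thesis"
      then obtain \<omega> where w: "E (fst p) \<omega>" "E (snd p) \<omega>" by blast
      have p1: "fst p \<subseteq> {1..n}" "card (fst p) = a" "snd p \<subseteq> {1..n}" "card (snd p) = b"
        and p2: "\<not> snd p \<subseteq> fst p"
        using p by (auto simp: PP_def Q_def)
      have "fst p \<subseteq> snd p" using E_nested[OF p1(1) p1(3) w] p2 by blast
      moreover have fs: "finite (snd p)" using finite_subset[OF p1(3)] by simp
      ultimately have "a \<le> b" using card_mono p1 by metis
      then have "card (fst p) = card (snd p)" using ba p1 by simp
      then have "fst p = snd p" using card_subset_eq[OF fs \<open>fst p \<subseteq> snd p\<close>] by simp
      then show False using p2 by simp
    qed
    then show ?thesis by (simp add: P2_def)
  qed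
  have eqv: "P2 (fst p) (snd p) = P2 A B" if p: "p \<in> Q" for p
  proof -
    have p1: "fst p \<subseteq> {1..n}" "card (fst p) = a" "snd p \<subseteq> fst p" "card (snd p) = b"
      using p by (auto simp: Q_def)
    obtain \<pi> where \<pi>: "bij_betw \<pi> {1..n} {1..n}" "\<pi>`A = fst p" "\<pi>`B = snd p"
      using perm_exists[of "{1..n}" B A "snd p" "fst p"] BA AI p1 a_def b_def by auto
    have "P2 (\<pi>`A) (\<pi>`B) = P2 A B"
      unfolding P2_def by (rule exch[OF \<pi>(1) AI]) (use BA AI in auto)
    then show ?thesis using \<pi> by simp
  qed
  have "1 = (\<Sum>p\<in>PP a b. P2 (fst p) (snd p))" using sum_one[of a b] an ba by simp
  also have "\<dots> = (\<Sum>p\<in>Q. P2 (fst p) (snd p))"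
    by (rule sum.mono_neutral_right[OF PP_finite QPP]) (use zero in auto)
  also have "\<dots> = (\<Sum>p\<in>Q. P2 A B)" by (rule sum.cong[OF refl eqv])
  also have "\<dots> = real (card Q) * P2 A B" by simp
  also have "card Q = (n choose a) * (a choose b)"
    unfolding Q_def using card_nested_pairs[of "{1..n}" a b] by simp
  finally have c1: "real ((n choose a) * (a choose b)) * P2 A B = 1" by simp
  have q: "q0 n A B = fact (n - a) * fact (a - b) * fact b / fact n"
    using BA by (simp add: q0_def a_def b_def)
  have "real ((n choose a) * (a choose b)) = fact n / (fact a * fact (n - a)) * (fact a / (fact b * fact (a - b)))"
    using binomial_fact[OF an, where 'a=real] binomial_fact[OF ba, where 'a=real] by simp
  then have c2: "real ((n choose a) * (a choose b)) * q0 n A B = 1"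
    unfolding q by (simp add: field_simps)
  from c1 c2 show ?thesis
    by (metis mult_cancel_left mult_zero_left zero_neq_one)
qed

lemma key:
  assumes A: "A \<subseteq> {1..n}" and B: "B \<subseteq> {1..n}"
  shows "P2 A B = q0 n A B"
proof (cases "B \<subseteq> A")
  case True then show ?thesis using key_nested A by blast
next
  case nBA: False
  show ?thesis
  proof (cases "A \<subseteq> B")
    case True
    have "P2 A B = P2 B A" by (simp add: P2_def Int_commute)
    also have "\<dots> = q0 n B A" using key_nested[OF True B] .
    finally show ?thesis by (simp add: q0_sym)
  next
    case False
    have "{\<omega>\<in>space M. E A \<omega>} \<inter> {\<omega>\<in>space M. E B \<omega>} = {}"
      using E_nested[OF A B] False nBA by blast
    then show ?thesis using False nBA by (simp add: P2_def q0_def)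
  qed
qed

lemma main:
  fixes \<phi>1 \<phi>2 :: "nat set \<Rightarrow> bool" and TS1 TS2 :: "'a \<Rightarrow> real" and k l :: nat
  assumes life1: "is_system_lifetime M n \<phi>1 T TS1"
    and life2: "is_system_lifetime M n \<phi>2 T TS2"
    and kn: "k \<le> n" and ln: "l \<le> n"
  shows "measure M {\<omega> \<in> space M. TS1 \<omega> > order_stat n T k \<omega> \<and> TS2 \<omega> > order_stat n T l \<omega>}
    = (\<Sum>A\<in>{A. A \<subseteq> {1..n} \<and> card A = n - k}. \<Sum>B\<in>{B. B \<subseteq> {1..n} \<and> card B = n - l}.
         q0 n A B * of_bool (\<phi>1 A) * of_bool (\<phi>2 B))"
proof -
  let ?F = "\<lambda>p. {\<omega>\<in>space M. E (fst p) \<omega>} \<inter> {\<omega>\<in>space M. E (snd p) \<omega>}"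
  define Ev where "Ev = {\<omega> \<in> space M. TS1 \<omega> > order_stat n T k \<omega> \<and> TS2 \<omega> > order_stat n T l \<omega>}"
  define PPs where "PPs = {p\<in>PP (n-k) (n-l). \<phi>1 (fst p) \<and> \<phi>2 (snd p)}"
  have Ev_eq: "Ev = {\<omega>\<in>space M. \<phi>1 (R k \<omega>) \<and> \<phi>2 (R l \<omega>)}"
  proof -
    have "TS1 \<omega> > order_stat n T k \<omega> \<longleftrightarrow> \<phi>1 (R k \<omega>)" if "\<omega> \<in> space M" for \<omega>
      using life1 that state_R[OF kn, of \<omega>] unfolding is_system_lifetime_def by metis
    moreover have "TS2 \<omega> > order_stat n T l \<omega> \<longleftrightarrow> \<phi>2 (R l \<omega>)" if "\<omega> \<in> space M" for \<omega>
      using life2 that state_R[OF ln, of \<omega>] unfolding is_system_lifetime_def by metis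
    ultimately show ?thesis unfolding Ev_def by auto
  qed
  have predphi: "Measurable.pred M (\<lambda>\<omega>. \<phi> (R j \<omega>))" for \<phi> j
  proof -
    have "\<phi> (R j \<omega>) \<longleftrightarrow> (\<exists>S\<in>Pow {1..n}. \<phi> S \<and> R j \<omega> = S)" for \<omega>
      using R_sub[of j \<omega>] by auto
    moreover have "Measurable.pred M (\<lambda>\<omega>. \<exists>S\<in>Pow {1..n}. \<phi> S \<and> R j \<omega> = S)"
      by (intro pred_intros_finite pred_intros_logic pred_R_eq finite_Pow_iff[THEN iffD2] finite_atLeastAtMost)
         (rule measurable_const, simp)
    ultimately show ?thesis by simp
  qed
  have Ev_sets: "Ev \<in> sets M"
  proof -
    have "Measurable.pred M (\<lambda>\<omega>. \<phi>1 (R k \<omega>) \<and> \<phi>2 (R l \<omega>))"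
      by (intro pred_intros_logic predphi)
    then show ?thesis unfolding Ev_eq Measurable.pred_def .
  qed
  have PPs_sub: "PPs \<subseteq> PP (n-k) (n-l)" by (auto simp: PPs_def)
  have PPs_fin: "finite PPs" using finite_subset[OF PPs_sub PP_finite] .
  have Fs: "?F p \<in> sets M" if "p \<in> PP (n-k) (n-l)" for p
    using that EV_sets by (auto simp: PP_def)
  have U_sets: "(\<Union>p\<in>PPs. ?F p) \<in> sets M"
    using Fs PPs_sub PPs_fin by (intro sets.finite_UN) auto
  have AE_eq: "AE \<omega> in M. \<omega> \<in> Ev \<longleftrightarrow> \<omega> \<in> (\<Union>p\<in>PPs. ?F p)"
    using AE_G
  proof (rule AE_mp, intro AE_I2 impI)
    fix \<omega> assume w: "\<omega> \<in> G"
    then have sp: "\<omega> \<in> space M" by (simp add: G_def)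
    note Rk = R_good[OF w kn] and Rl = R_good[OF w ln]
    show "\<omega> \<in> Ev \<longleftrightarrow> \<omega> \<in> (\<Union>p\<in>PPs. ?F p)"
    proof
      assume "\<omega> \<in> Ev"
      then have ph: "\<phi>1 (R k \<omega>)" "\<phi>2 (R l \<omega>)" unfolding Ev_eq by auto
      have "(R k \<omega>, R l \<omega>) \<in> PPs" using Rk Rl ph by (auto simp: PPs_def PP_def)
      moreover have "\<omega> \<in> ?F (R k \<omega>, R l \<omega>)" using Rk Rl sp by auto
      ultimately show "\<omega> \<in> (\<Union>p\<in>PPs. ?F p)" by blast
    next
      assume "\<omega> \<in> (\<Union>p\<in>PPs. ?F p)"
      then obtain p where p: "p \<in> PPs" and wp: "E (fst p) \<omega>" "E (snd p) \<omega>" by auto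
      have p1: "fst p \<subseteq> {1..n}" "card (fst p) = n - k" "snd p \<subseteq> {1..n}" "card (snd p) = n - l"
        "\<phi>1 (fst p)" "\<phi>2 (snd p)" using p by (auto simp: PPs_def PP_def)
      have "fst p = R k \<omega>" by (rule E_unique[OF p1(1) Rk(1) _ wp(1) Rk(3)]) (simp add: p1 Rk)
      moreover have "snd p = R l \<omega>" by (rule E_unique[OF p1(3) Rl(1) _ wp(2) Rl(3)]) (simp add: p1 Rl)
      ultimately show "\<omega> \<in> Ev" unfolding Ev_eq using p1 sp by auto
    qed
  qed
  have "measure M Ev = measure M (\<Union>p\<in>PPs. ?F p)"
    by (rule measure_eq_AE[OF AE_eq Ev_sets U_sets])
  also have "\<dots> = (\<Sum>p\<in>PPs. measure M (?F p))"
  proof (rule measure_finite_Union[OF PPs_fin])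
    show "?F ` PPs \<subseteq> sets M" using Fs PPs_sub by auto
    show "disjoint_family_on ?F PPs" by (rule disjoint_family_on_mono[OF PPs_sub disj_PP])
  qed (simp add: emeasure_eq_measure)
  also have "\<dots> = (\<Sum>p\<in>PPs. q0 n (fst p) (snd p))"
    by (rule sum.cong[OF refl]) (use key in \<open>auto simp: P2_def PPs_def PP_def\<close>)
  also have "\<dots> = (\<Sum>p\<in>PP (n-k) (n-l). if \<phi>1 (fst p) \<and> \<phi>2 (snd p) then q0 n (fst p) (snd p) else 0)"
    unfolding PPs_def by (rule sum.inter_filter[OF PP_finite])
  also have "\<dots> = (\<Sum>p\<in>PP (n-k) (n-l). q0 n (fst p) (snd p) * of_bool (\<phi>1 (fst p)) * of_bool (\<phi>2 (snd p)))"
    by (rule sum.cong) auto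
  also have "PP (n-k) (n-l) = {A. A \<subseteq> {1..n} \<and> card A = n - k} \<times> {B. B \<subseteq> {1..n} \<and> card B = n - l}"
    by (auto simp: PP_def)
  also have "(\<Sum>p\<in>{A. A \<subseteq> {1..n} \<and> card A = n - k} \<times> {B. B \<subseteq> {1..n} \<and> card B = n - l}.
        q0 n (fst p) (snd p) * of_bool (\<phi>1 (fst p)) * of_bool (\<phi>2 (snd p)))
      = (\<Sum>A\<in>{A. A \<subseteq> {1..n} \<and> card A = n - k}. \<Sum>B\<in>{B. B \<subseteq> {1..n} \<and> card B = n - l}.
         q0 n A B * of_bool (\<phi>1 A) * of_bool (\<phi>2 B))"
    by (subst sum.cartesian_product) (simp only: split_def)
  finally show ?thesis unfolding Ev_def .
qed

end


theorem corollary9: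
  fixes M :: "'a measure" and n :: nat and T :: "nat \<Rightarrow> 'a \<Rightarrow> real"
    and \<phi>1 \<phi>2 :: "nat set \<Rightarrow> bool" and TS1 TS2 :: "'a \<Rightarrow> real" and k l :: nat
  assumes "prob_space M"
    and "n \<ge> 1"
    and rv: "\<And>j. j \<in> {1..n} \<Longrightarrow> T j \<in> borel_measurable M"
    and nonneg: "\<And>j \<omega>. j \<in> {1..n} \<Longrightarrow> \<omega> \<in> space M \<Longrightarrow> 0 \<le> T j \<omega>"
    and indep: "prob_space.indep_vars M (\<lambda>_. borel) T {1..n}"
    and ident: "\<And>j. j \<in> {1..n} \<Longrightarrow> distr M borel (T j) = distr M borel (T 1)"
    and cont: "\<And>t. measure M {\<omega> \<in> space M. T 1 \<omega> = t} = 0"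
    and sc1: "semicoherent n \<phi>1" and sc2: "semicoherent n \<phi>2"
    and life1: "is_system_lifetime M n \<phi>1 T TS1"
    and life2: "is_system_lifetime M n \<phi>2 T TS2"
    and "k \<le> n" and "l \<le> n"
  shows "measure M {\<omega> \<in> space M. TS1 \<omega> > order_stat n T k \<omega> \<and> TS2 \<omega> > order_stat n T l \<omega>}
    = (\<Sum>A\<in>{A. A \<subseteq> {1..n} \<and> card A = n - k}. \<Sum>B\<in>{B. B \<subseteq> {1..n} \<and> card B = n - l}.
         q0 n A B * of_bool (\<phi>1 A) * of_bool (\<phi>2 B))"
proof -
  interpret S: setting M n T
    apply (intro setting.intro setting_axioms.intro)
          apply (fact assms(1))
         apply (fact assms(2))
        apply (erule rv)
       apply (erule (1) nonneg)
      apply (fact indep)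
     apply (erule ident)
    apply (rule cont)
    done
  show ?thesis by (rule S.main[OF life1 life2 \<open>k \<le> n\<close> \<open>l \<le> n\<close>])
qed

end
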